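(* Let $M, K \ge 1$ be integers, let $(\mathcal{U}, (\cdot,\cdot)_{\mathcal{U}})$ be a real Hilbert space with norm $\|\cdot\|_{\mathcal{U}}$, and let $\mathcal{P} \subset \mathbb{R}^{p}$ be a compact set of hyper-parameters. For every $\theta \in \mathcal{P}$ let $a_\theta : \mathcal{U}\times\mathcal{U} \to \mathbb{R}$ be a bounded, coercive bilinear form and $b_\theta : \mathbb{R}^M \times \mathcal{U} \to \mathbb{R}$ a non-trivial (not identically zero) bounded bilinear form, and for $m \in \mathbb{R}^M$ let $u_\theta(m) \in \mathcal{U}$ be the unique solution of $a_\theta(u_\theta(m), \psi) = b_\theta(m,\psi)$ for all $\psi \in \mathcal{U}$. Let $\Sigma_0 \in \mathbb{R}^{M\times M}$ be symmetric positive definite, with $\|m\|_{\Sigma_0^{-1}}^2 := m^T \Sigma_0^{-1} m$, and let $C_{\Sigma_0^{-1}} := \sup_{m \ne 0} \|m\|_2/\|m\|_{\Sigma_0^{-1}}$, where $\|\cdot\|_2$ is the Euclidean norm. Let $L = (l_1,\dots,l_K)^T : \mathcal{U} \to \mathbb{R}^K$ with each $l_k$ a bounded linear functional on $\mathcal{U}$, let $\Sigma_L \in \mathbb{R}^{K\times K}$ be symmetric positive definite with $\|d\|_{\Sigma_L^{-1}}^2 := d^T\Sigma_L^{-1} d$, and let $\sigma > 0$. Fix $\theta \in \mathcal{P}$. Let $G_{\theta,L} \in \mathbb{R}^{K \times M}$ be the matrix of the linear map $m \mapsto L u_\theta(m)$, and define the posterior covariance $$\Sigma_{\mathrm{post}}^{\theta,L}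 := \Big(\tfrac{1}{\sigma^2} G_{\theta,L}^T \Sigma_L^{-1} G_{\theta,L} + \Sigma_0^{-1}\Big)^{-1}.$$ Let $X_\theta := \{m \in \mathbb{R}^M : u_\theta(m) = 0\}$, let $X_\theta^\perp$ be its orthogonal complement in the Euclidean inner product, and let $\Pi$ be the Euclidean orthogonal projection onto $X_\theta^\perp$. Define $$\eta_{\inf} := \inf_{0\neq m \in X_\theta^\perp} \frac{\|u_\theta(m)\|_{\mathcal{U}}}{\|m\|_{\Sigma_0^{-1}}}, \qquad \beta_{\theta,L} := \inf\{\|L u_\theta(m)\|_{\Sigma_L^{-1}} : m \in \mathbb{R}^M,\ \|u_\theta(m)\|_{\mathcal{U}} = 1\}.$$ Let $0 < \lambda_1 \le \dots \le \lambda_M$ be the eigenvalues of $\Sigma_{\mathrm{post}}^{\theta,L}$ (with multiplicity) and $(m_{\lambda_i})_{i=1}^M$ a Euclidean-orthonormal basis of $\mathbb{R}^M$ with $\Sigma_{\mathrm{post}}^{\theta,L} m_{\lambda_i} = \lambda_i m_{\lambda_i}$. Then for each $i = 1,\dots,M$, $$\lambda_i \le \frac{C_{\Sigma_0^{-1}}^2}{\frac{1}{\sigma^2}\beta_{\theta,L}^2\, \eta_{\inf}^2\, \|\Pi m_{\lambda_i}\|_2^2 + 1},$$ and consequently $$\operatorname{trace}(\Sigma_{\mathrm{post}}^{\theta,L}) \le C_{\Sigma_0^{-1}}^2 \sum_{i=1}^M \Big(\tfrac{1}{\sigma^2}\beta_{\theta,L}^2\, \eta_{\inf}^2\, \|\Pi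 m_{\lambda_i}\|_2^2 + 1\Big)^{-1}.$$
   Context: This is the setting of a hyper-parameterized linear Bayesian inverse problem: prior $\mathcal{N}(m_0,\Sigma_0)$ on the parameter $m\in\mathbb{R}^M$, data $d = L u_\theta(m) + \eta$ with noise $\eta \sim \mathcal{N}(0,\sigma^2\Sigma_L)$; $\Sigma_{\mathrm{post}}^{\theta,L}$ is the covariance of the resulting Gaussian posterior. $\beta_{\theta,L}$ is called the observability coefficient. Since $b_\theta$ is non-trivial, $X_\theta^\perp \ne \{0\}$ and $\eta_{\inf} > 0$. *)

theory Defs
  imports "HOL-Analysis.Analysis"
begin

definition spd :: "real^'n^'n \<Rightarrow> bool" where
  "spd S \<longleftrightarrow> transpose S = S \<and> (\<forall>x. x \<noteq> 0 \<longrightarrow> x \<bullet> (S *v x) > 0)"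

definition inv_norm :: "real^'n^'n \<Rightarrow> real^'n \<Rightarrow> real" where
  "inv_norm S x = sqrt (x \<bullet> (matrix_inv S *v x))"

definition bounded_bilinear_form :: "('a::real_normed_vector \<Rightarrow> 'b::real_normed_vector \<Rightarrow> real) \<Rightarrow> bool" where
  "bounded_bilinear_form f \<longleftrightarrow> bilinear f \<and> (\<exists>C. \<forall>x y. \<bar>f x y\<bar> \<le> C * norm x * norm y)"

definition coercive_form :: "('a::real_normed_vector \<Rightarrow> 'a \<Rightarrow> real) \<Rightarrow> bool" where
  "coercive_form f \<longleftrightarrow> (\<exists>\<alpha>>0. \<forall>x. f x x \<ge> \<alpha> * (norm x)\<^sup>2)"

definition obs :: "('k \<Rightarrow> 'u \<Rightarrow> real) \<Rightarrow> 'u \<Rightarrow> real^'k" where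
  "obs l v = (\<chi> k. l k v)"

end

theory Submission
  imports Defs
begin


lemma trace_orthonormal:
  fixes Q :: "real^'n^'n" and v :: "nat \<Rightarrow> real^'n"
  assumes orth: "\<And>i j. i \<in> {1..CARD('n)} \<Longrightarrow> j \<in> {1..CARD('n)} \<Longrightarrow>
         v i \<bullet> v j = (if i = j then 1 else 0)"
  shows "trace Q = (\<Sum>i=1..CARD('n). v i \<bullet> (Q *v v i))"
proof -
  obtain g :: "'n \<Rightarrow> nat" where g: "bij_betw g UNIV {1..CARD('n)}"
    using finite_same_card_bij[of "UNIV::'n set" "{1..CARD('n)}"] by auto
  define B :: "real^'n^'n" where "B = (\<chi> j. v (g j))"
  have gin: "g j \<in> {1..CARD('n)}" for j using g by (auto simp: bij_betw_def)
  have ginj: "g j = g k \<longleftrightarrow> j = k" for j k using g by (auto simp: bij_betw_def inj_on_def)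
  have "B ** transpose B = mat 1"
  proof -
    have "(B ** transpose B) $ j $ k = mat 1 $ j $ k" for j k
    proof -
      have "(B ** transpose B) $ j $ k = v (g j) \<bullet> v (g k)"
        by (simp add: matrix_matrix_mult_def B_def transpose_def inner_vec_def)
      also have "\<dots> = mat 1 $ j $ k" using orth[OF gin gin] ginj by (simp add: mat_def)
      finally show ?thesis .
    qed
    then show ?thesis by (simp add: vec_eq_iff)
  qed
  then have BB: "transpose B ** B = mat 1" using matrix_left_right_inverse by blast
  have "(\<Sum>i=1..CARD('n). v i \<bullet> (Q *v v i)) = (\<Sum>j\<in>UNIV. v (g j) \<bullet> (Q *v v (g j)))"
    using sum.reindex_bij_betw[OF g, of "\<lambda>i. v i \<bullet> (Q *v v i)"] by simp
  also have "\<dots> = trace (B ** Q ** transpose B)"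
    unfolding trace_def
  proof (rule sum.cong[OF refl])
    fix j
    show "v (g j) \<bullet> (Q *v v (g j)) = (B ** Q ** transpose B) $ j $ j"
      apply (simp add: matrix_matrix_mult_def B_def transpose_def inner_vec_def matrix_vector_mult_def
          sum_distrib_left sum_distrib_right ac_simps)
        by (subst sum.swap, simp add: ac_simps)
  qed
  also have "\<dots> = trace (Q ** transpose B ** B)"
    by (metis trace_mul_sym matrix_mul_assoc)
  also have "\<dots> = trace Q" by (simp add: BB flip: matrix_mul_assoc)
  finally show ?thesis by simp
qed



lemma pd_invertible:
  fixes S :: "real^'n^'n"
  assumes pd: "\<And>x. x \<noteq> 0 \<Longrightarrow> x \<bullet> (S *v x) > 0"
  shows "invertible S" "S ** matrix_inv S = mat 1" "matrix_inv S ** S = mat 1"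
proof -
  have "inj ((*v) S)"
  proof (rule injI)
    fix x y assume "S *v x = S *v y"
    then have "S *v (x - y) = 0" by (simp add: matrix_vector_mult_diff_distrib)
    then show "x = y" using pd[of "x - y"] by auto
  qed
  then show inv: "invertible S"
    using invertible_left_inverse matrix_left_invertible_injective by blast
  then have "\<exists>A'. S ** A' = mat 1 \<and> A' ** S = mat 1" unfolding invertible_def .
  then have "S ** matrix_inv S = mat 1 \<and> matrix_inv S ** S = mat 1"
    unfolding matrix_inv_def by (rule someI_ex)
  then show "S ** matrix_inv S = mat 1" "matrix_inv S ** S = mat 1" by auto
qed

lemma spd_inv_pd:
  fixes S :: "real^'n^'n"
  assumes "spd S"
  shows "\<And>x. x \<noteq> 0 \<Longrightarrow> x \<bullet> (matrix_inv S *v x) > 0"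
    and "\<And>x. x \<bullet> (matrix_inv S *v x) \<ge> 0"
proof -
  have pd: "\<And>x. x \<noteq> 0 \<Longrightarrow> x \<bullet> (S *v x) > 0" using assms by (auto simp: spd_def)
  have SS: "S ** matrix_inv S = mat 1" by (rule pd_invertible(2)[OF pd])
  have key: "x \<bullet> (matrix_inv S *v x) = y \<bullet> (S *v y) \<and> (x = 0 \<longleftrightarrow> y = 0)"
    if y: "y = matrix_inv S *v x" for x y
  proof -
    have "S *v y = x" using y SS by (simp add: matrix_vector_mul_assoc)
    then show ?thesis using y by (auto simp: inner_commute)
  qed
  show "x \<bullet> (matrix_inv S *v x) > 0" if "x \<noteq> 0" for x
    using key[OF refl, of x] pd that by auto
  show "x \<bullet> (matrix_inv S *v x) \<ge> 0" for x
    using key[OF refl, of x] pd by (cases "x = 0") (auto intro: less_imp_le)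
qed

lemma qf_scale: "(c *\<^sub>R x) \<bullet> ((Q::real^'n^'n) *v (c *\<^sub>R x)) = c\<^sup>2 * (x \<bullet> (Q *v x))"
  by (simp add: matrix_vector_mult_scaleR power2_eq_square)

lemma qf_pd_lower:
  fixes Q :: "real^'n^'n"
  assumes pd: "\<And>x. x \<noteq> 0 \<Longrightarrow> x \<bullet> (Q *v x) > 0"
  shows "\<exists>\<mu>>0. \<forall>x. \<mu> * (norm x)\<^sup>2 \<le> x \<bullet> (Q *v x)"
proof -
  have cont: "continuous_on (sphere 0 1) (\<lambda>x. x \<bullet> (Q *v x))"
    by (intro continuous_intros linear_continuous_on linear_conv_bounded_linear[THEN iffD1]
        matrix_vector_mul_linear)
  have ne: "sphere (0::real^'n) 1 \<noteq> {}" by simp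
  obtain x0 where x0: "x0 \<in> sphere 0 1" "\<And>y. y \<in> sphere 0 1 \<Longrightarrow> x0 \<bullet> (Q *v x0) \<le> y \<bullet> (Q *v y)"
    using continuous_attains_inf[OF compact_sphere ne cont] by blast
  have "x0 \<noteq> 0" using x0(1) by auto
  then have pos: "x0 \<bullet> (Q *v x0) > 0" using pd by blast
  have "x0 \<bullet> (Q *v x0) * (norm x)\<^sup>2 \<le> x \<bullet> (Q *v x)" for x
  proof (cases "x = 0")
    case True then show ?thesis by simp
  next
    case False
    let ?y = "(1 / norm x) *\<^sub>R x"
    have "?y \<in> sphere 0 1" using False by simp
    then have "x0 \<bullet> (Q *v x0) \<le> ?y \<bullet> (Q *v ?y)" by (rule x0(2))
    also have "\<dots> = (1/norm x)\<^sup>2 * (x \<bullet> (Q *v x))" by (rule qf_scale)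
    finally have "x0 \<bullet> (Q *v x0) * (norm x)\<^sup>2 \<le> (1/norm x)\<^sup>2 * (x \<bullet> (Q *v x)) * (norm x)\<^sup>2"
      by (simp add: mult_right_mono)
    also have "\<dots> = x \<bullet> (Q *v x)" using False by (simp add: field_simps)
    finally show ?thesis .
  qed
  then show ?thesis using pos by blast
qed



lemma sol_linear:
  fixes a' :: "'u::real_normed_vector \<Rightarrow> 'u \<Rightarrow> real" and b' :: "'m::real_normed_vector \<Rightarrow> 'u \<Rightarrow> real"
  assumes ab: "bilinear a'" and ac: "coercive_form a'" and bb: "bilinear b'"
    and sol: "\<And>m \<psi>. a' (w m) \<psi> = b' m \<psi>"
  shows "linear w"
proof -
  have la: "linear (\<lambda>x. a' x \<psi>)" for \<psi> using ab by (simp add: bilinear_def)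
  have lb: "linear (\<lambda>x. b' x \<psi>)" for \<psi> using bb by (simp add: bilinear_def)
  obtain \<alpha> where \<alpha>: "\<alpha> > 0" "\<And>x. a' x x \<ge> \<alpha> * (norm x)\<^sup>2" using ac by (auto simp: coercive_form_def)
  have uniq: "z = 0" if "\<And>\<psi>. a' z \<psi> = 0" for z
  proof -
    have "\<alpha> * (norm z)\<^sup>2 \<le> 0" using \<alpha>(2)[of z] that[of z] by simp
    then have "(norm z)\<^sup>2 \<le> 0" using \<alpha>(1) by (simp add: mult_le_0_iff)
    then show ?thesis by simp
  qed
  show ?thesis
  proof (rule linearI)
    fix x y
    have "a' (w (x + y) - w x - w y) \<psi> = 0" for \<psi>
      using linear_diff[OF la[of \<psi>]] linear_add[OF lb[of \<psi>]] sol by simp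
    then have "w (x + y) - w x - w y = 0" by (rule uniq)
    then show "w (x + y) = w x + w y" by (metis diff_diff_eq eq_iff_diff_eq_0)
  next
    fix c :: real and x
    have "a' (w (c *\<^sub>R x) - c *\<^sub>R w x) \<psi> = 0" for \<psi>
      using linear_diff[OF la[of \<psi>]] linear_scale[OF la[of \<psi>]] linear_scale[OF lb[of \<psi>]] sol by simp
    then have "w (c *\<^sub>R x) - c *\<^sub>R w x = 0" by (rule uniq)
    then show "w (c *\<^sub>R x) = c *\<^sub>R w x" by (metis eq_iff_diff_eq_0)
  qed
qed


lemma proj_props:
  fixes X :: "('a::euclidean_space) set"
  assumes X: "subspace X"
  shows "x - closest_point (orthogonal_comp X) x \<in> X" "closest_point (orthogonal_comp X) x \<in> orthogonal_comp X"
proof -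
  obtain v w where vw: "x = v + w" "v \<in> X" "w \<in> orthogonal_comp X"
  proof -
    have "x \<in> X + orthogonal_comp X" by (simp add: subspace_sum_orthogonal_comp[OF X])
    then show ?thesis using that by (auto elim!: set_plus_elim)
  qed
  have sc: "subspace (orthogonal_comp X)" by (rule subspace_orthogonal_comp)
  have "w = closest_point (orthogonal_comp X) x"
  proof (rule closest_point_unique)
    show "convex (orthogonal_comp X)" using sc by (rule subspace_imp_convex)
    show "closed (orthogonal_comp X)" using sc by (rule closed_subspace)
    show "w \<in> orthogonal_comp X" by fact
    show "\<forall>z\<in>orthogonal_comp X. dist x w \<le> dist x z"
    proof
      fix z assume z: "z \<in> orthogonal_comp X"
      have "w - z \<in> orthogonal_comp X" using sc z vw(3) by (simp add: subspace_diff)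
      then have o: "v \<bullet> (w - z) = 0" using vw(2) unfolding orthogonal_comp_def orthogonal_def by blast
      have dxz: "dist x z = norm (v + (w - z))" unfolding vw(1) dist_norm by (simp add: add_diff_eq)
      have dxw: "dist x w = norm v" unfolding vw(1) dist_norm by simp
      have "(norm (v + (w - z)))\<^sup>2 = (norm v)\<^sup>2 + (norm (w - z))\<^sup>2"
        by (rule norm_add_Pythagorean) (simp add: orthogonal_def o)
      then have "(dist x w)\<^sup>2 \<le> (dist x z)\<^sup>2" unfolding dxz dxw by simp
      then show "dist x w \<le> dist x z" by (rule power2_le_imp_le) simp_all
    qed
  qed
  then show "x - closest_point (orthogonal_comp X) x \<in> X" "closest_point (orthogonal_comp X) x \<in> orthogonal_comp X"
    using vw by auto
qed



lemma inv_norm_scale: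
  "inv_norm S (c *\<^sub>R x) = \<bar>c\<bar> * inv_norm S x"
  unfolding inv_norm_def qf_scale by (simp add: real_sqrt_mult)

theorem mainTheorem1:
  fixes P :: "(real^'p) set"
    and a :: "real^'p \<Rightarrow> 'u::{real_inner,complete_space} \<Rightarrow> 'u \<Rightarrow> real"
    and b :: "real^'p \<Rightarrow> real^'m::finite \<Rightarrow> 'u \<Rightarrow> real"
    and u :: "real^'p \<Rightarrow> real^'m \<Rightarrow> 'u"
    and \<Sigma>0 :: "real^'m^'m"
    and l :: "'k::finite \<Rightarrow> 'u \<Rightarrow> real"
    and \<Sigma>L :: "real^'k^'k"
    and \<sigma> :: real
    and \<theta> :: "real^'p"
    and lam :: "nat \<Rightarrow> real"
    and mv :: "nat \<Rightarrow> real^'m"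
  assumes P_compact: "compact P"
    and a_bd: "\<And>t. t \<in> P \<Longrightarrow> bounded_bilinear_form (a t)"
    and a_coer: "\<And>t. t \<in> P \<Longrightarrow> coercive_form (a t)"
    and b_bd: "\<And>t. t \<in> P \<Longrightarrow> bounded_bilinear_form (b t)"
    and b_nontriv: "\<And>t. t \<in> P \<Longrightarrow> \<exists>m \<psi>. b t m \<psi> \<noteq> 0"
    and u_sol: "\<And>t m \<psi>. t \<in> P \<Longrightarrow> a t (u t m) \<psi> = b t m \<psi>"
    and \<Sigma>0_spd: "spd \<Sigma>0"
    and l_bd: "\<And>k. bounded_linear (l k)"
    and \<Sigma>L_spd: "spd \<Sigma>L"
    and \<sigma>_pos: "\<sigma> > 0"
    and \<theta>P: "\<theta> \<in> P"
    and lam_pos: "\<And>i. i \<in> {1..CARD('m)} \<Longrightarrow> 0 < lam i"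
    and lam_sorted: "\<And>i j. i \<in> {1..CARD('m)} \<Longrightarrow> j \<in> {1..CARD('m)} \<Longrightarrow> i \<le> j \<Longrightarrow> lam i \<le> lam j"
    and mv_orthonormal: "\<And>i j. i \<in> {1..CARD('m)} \<Longrightarrow> j \<in> {1..CARD('m)} \<Longrightarrow>
         mv i \<bullet> mv j = (if i = j then 1 else 0)"
    and mv_eigen: "\<And>i. i \<in> {1..CARD('m)} \<Longrightarrow>
         matrix_inv ((1 / \<sigma>\<^sup>2) *\<^sub>R (transpose (matrix (\<lambda>m. obs l (u \<theta> m))) ** matrix_inv \<Sigma>L
             ** matrix (\<lambda>m. obs l (u \<theta> m))) + matrix_inv \<Sigma>0) *v mv i = lam i *\<^sub>R mv i"
  shows "(let G = matrix (\<lambda>m. obs l (u \<theta> m));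
              \<Sigma>post = matrix_inv ((1 / \<sigma>\<^sup>2) *\<^sub>R (transpose G ** matrix_inv \<Sigma>L ** G) + matrix_inv \<Sigma>0);
              C = Sup {norm m / inv_norm \<Sigma>0 m | m. m \<noteq> 0};
              X = {m. u \<theta> m = 0};
              \<eta>inf = Inf {norm (u \<theta> m) / inv_norm \<Sigma>0 m | m. m \<in> orthogonal_comp X \<and> m \<noteq> 0};
              \<beta> = Inf {inv_norm \<Sigma>L (obs l (u \<theta> m)) | m. norm (u \<theta> m) = 1};
              Proj = closest_point (orthogonal_comp X)
          in (\<forall>i\<in>{1..CARD('m)}.
                lam i \<le> C\<^sup>2 / ((1 / \<sigma>\<^sup>2) * \<beta>\<^sup>2 * \<eta>inf\<^sup>2 * (norm (Proj (mv i)))\<^sup>2 + 1))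
             \<and> trace \<Sigma>post \<le> C\<^sup>2 * (\<Sum>i=1..CARD('m).
                  1 / ((1 / \<sigma>\<^sup>2) * \<beta>\<^sup>2 * \<eta>inf\<^sup>2 * (norm (Proj (mv i)))\<^sup>2 + 1)))"
proof -
  have lin_u: "linear (u \<theta>)"
    using sol_linear[of "a \<theta>" "b \<theta>" "u \<theta>"] a_bd[OF \<theta>P] a_coer[OF \<theta>P] b_bd[OF \<theta>P] u_sol[OF \<theta>P]
    by (auto simp: bounded_bilinear_form_def)
  define F where "F = (\<lambda>m. obs l (u \<theta> m))"
  have ll: "linear (l k)" for k using l_bd[of k] by (rule bounded_linear.linear)
  have lin_F: "linear F"
  proof (rule linearI)
    fix x y show "F (x + y) = F x + F y"
      unfolding F_def obs_def by (simp add: vec_eq_iff linear_add[OF lin_u] linear_add[OF ll])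
  next
    fix c :: real and x show "F (c *\<^sub>R x) = c *\<^sub>R F x"
      unfolding F_def obs_def by (simp add: vec_eq_iff linear_scale[OF lin_u] linear_scale[OF ll])
  qed
  define G where "G = matrix (\<lambda>m. obs l (u \<theta> m))"
  have GF: "G *v m = F m" for m unfolding G_def F_def[symmetric] using matrix_vector_mul(2)[OF lin_F] by metis
  define SLi where "SLi = matrix_inv \<Sigma>L"
  define S0i where "S0i = matrix_inv \<Sigma>0"
  define A where "A = (1 / \<sigma>\<^sup>2) *\<^sub>R (transpose G ** SLi ** G) + S0i"
  define Post where "Post = matrix_inv A"
  have SLnn: "x \<bullet> (SLi *v x) \<ge> 0" for x unfolding SLi_def by (rule spd_inv_pd(2)[OF \<Sigma>L_spd])
  have S0nn: "x \<bullet> (S0i *v x) \<ge> 0" for x unfolding S0i_def by (rule spd_inv_pd(2)[OF \<Sigma>0_spd])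
  have S0pd: "x \<noteq> 0 \<Longrightarrow> x \<bullet> (S0i *v x) > 0" for x unfolding S0i_def by (rule spd_inv_pd(1)[OF \<Sigma>0_spd])
  have quad: "m \<bullet> (A *v m) = (1 / \<sigma>\<^sup>2) * ((G *v m) \<bullet> (SLi *v (G *v m))) + m \<bullet> (S0i *v m)" for m
  proof -
    have "(transpose G ** SLi ** G) *v m = transpose G *v (SLi *v (G *v m))"
      by (simp add: matrix_vector_mul_assoc matrix_mul_assoc)
    moreover have "m \<bullet> (transpose G *v y) = (G *v m) \<bullet> y" for y
    proof -
      have "transpose G *v y = y v* G"
        using vector_transpose_matrix[of y "transpose G"] by simp
      then show ?thesis using dot_lmul_matrix[of y G m] by (simp add: inner_commute)
    qed
    ultimately show ?thesis
      unfolding A_def by (simp add: matrix_vector_mult_add_rdistrib scaleR_matrix_vector_assoc[symmetric] inner_add_right)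
  qed
  have Apd: "m \<noteq> 0 \<Longrightarrow> m \<bullet> (A *v m) > 0" for m
    unfolding quad using SLnn[of "G *v m"] S0pd[of m] by (simp add: add_nonneg_pos)
  have AP: "A ** Post = mat 1" unfolding Post_def by (rule pd_invertible(2)[OF Apd])
  have eig: "Post *v mv i = lam i *\<^sub>R mv i" if "i \<in> {1..CARD('m)}" for i
    using mv_eigen[OF that] unfolding Post_def A_def SLi_def S0i_def G_def .
  have unit: "mv i \<bullet> mv i = 1" if "i \<in> {1..CARD('m)}" for i using mv_orthonormal[OF that that] by simp
  have postq: "mv i \<bullet> (Post *v mv i) = lam i" if "i \<in> {1..CARD('m)}" for i
    using eig[OF that] unit[OF that] by simp
  have invq: "lam i * (mv i \<bullet> (A *v mv i)) = 1" if "i \<in> {1..CARD('m)}" for i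
  proof -
    have "mv i = A *v (Post *v mv i)" using AP by (simp add: matrix_vector_mul_assoc)
    also have "\<dots> = lam i *\<^sub>R (A *v mv i)" using eig[OF that] by (simp add: matrix_vector_mult_scaleR)
    finally have "mv i \<bullet> mv i = mv i \<bullet> (lam i *\<^sub>R (A *v mv i))" by simp
    then show ?thesis using unit[OF that] by simp
  qed
  define Cs where "Cs = {norm m / inv_norm \<Sigma>0 m | m. m \<noteq> 0}"
  define C where "C = Sup Cs"
  obtain \<mu> where \<mu>: "\<mu> > 0" "\<And>x. \<mu> * (norm x)\<^sup>2 \<le> x \<bullet> (S0i *v x)"
    using qf_pd_lower[OF S0pd] by blast
  have invn0: "inv_norm \<Sigma>0 x = sqrt (x \<bullet> (S0i *v x))" for x unfolding inv_norm_def S0i_def ..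
  have invlow: "sqrt \<mu> * norm x \<le> inv_norm \<Sigma>0 x" for x
  proof -
    have "sqrt (\<mu> * (norm x)\<^sup>2) \<le> sqrt (x \<bullet> (S0i *v x))" using \<mu>(2)[of x] by simp
    then show ?thesis unfolding invn0 by (simp add: real_sqrt_mult)
  qed
  have invpos: "x \<noteq> 0 \<Longrightarrow> inv_norm \<Sigma>0 x > 0" for x unfolding invn0 using S0pd by simp
  have bddC: "bdd_above Cs"
  proof (rule bdd_aboveI)
    fix r assume "r \<in> Cs"
    then obtain m where m: "m \<noteq> 0" "r = norm m / inv_norm \<Sigma>0 m" unfolding Cs_def by blast
    have "norm m / inv_norm \<Sigma>0 m \<le> norm m / (sqrt \<mu> * norm m)"
      using invlow[of m] \<mu>(1) m(1) by (intro divide_left_mono) (auto intro!: mult_pos_pos order_less_le_trans[OF _ invlow[of m]])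
    also have "\<dots> = 1 / sqrt \<mu>" using m(1) by simp
    finally show "r \<le> 1 / sqrt \<mu>" using m by simp
  qed
  have key1: "norm m \<le> C * inv_norm \<Sigma>0 m" if "m \<noteq> 0" for m
  proof -
    have "norm m / inv_norm \<Sigma>0 m \<le> C" unfolding C_def
      by (rule cSup_upper[OF _ bddC]) (use that in \<open>auto simp: Cs_def\<close>)
    then show ?thesis using invpos[OF that] by (simp add: divide_le_eq)
  qed
  obtain k0 :: 'm where True by simp
  have Cpos: "C > 0"
  proof -
    have "norm (axis k0 (1::real)) \<le> C * inv_norm \<Sigma>0 (axis k0 1)" by (rule key1) (simp add: axis_eq_0_iff)
    moreover have "inv_norm \<Sigma>0 (axis k0 (1::real)) > 0" by (rule invpos) (simp add: axis_eq_0_iff)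
    ultimately show ?thesis by (simp add: zero_less_mult_iff) (metis norm_axis_1 zero_less_one not_le order_trans mult_nonpos_nonneg less_le)
  qed
  have key1u: "1 \<le> C\<^sup>2 * (m \<bullet> (S0i *v m))" if "norm m = 1" for m
  proof -
    have "m \<noteq> 0" using that by auto
    then have "1 \<le> C * inv_norm \<Sigma>0 m" using key1 that by fastforce
    then have "1\<^sup>2 \<le> (C * inv_norm \<Sigma>0 m)\<^sup>2" by (rule power_mono) simp
    then show ?thesis unfolding invn0 power_mult_distrib using S0nn[of m] by simp
  qed
  define X where "X = {m. u \<theta> m = 0}"
  have subX: "subspace X" unfolding X_def subspace_def
    by (simp add: linear_0[OF lin_u] linear_add[OF lin_u] linear_scale[OF lin_u])
  define Proj where "Proj = closest_point (orthogonal_comp X)"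
  define \<eta>inf where "\<eta>inf = Inf {norm (u \<theta> m) / inv_norm \<Sigma>0 m | m. m \<in> orthogonal_comp X \<and> m \<noteq> 0}"
  define \<beta> where "\<beta> = Inf {inv_norm \<Sigma>L (obs l (u \<theta> m)) | m. norm (u \<theta> m) = 1}"
  have invnL: "inv_norm \<Sigma>L x = sqrt (x \<bullet> (SLi *v x))" for x unfolding inv_norm_def SLi_def ..
  have key2: "\<beta>\<^sup>2 * \<eta>inf\<^sup>2 * (norm (Proj m))\<^sup>2 \<le> C\<^sup>2 * ((G *v m) \<bullet> (SLi *v (G *v m)))" for m
  proof -
    define p where "p = Proj m"
    have pX: "m - p \<in> X" "p \<in> orthogonal_comp X" unfolding p_def Proj_def using proj_props[OF subX] by auto
    have up: "u \<theta> p = u \<theta> m"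
      using pX(1) linear_diff[OF lin_u, of m p] unfolding X_def by simp
    have rhs0: "0 \<le> C\<^sup>2 * ((G *v m) \<bullet> (SLi *v (G *v m)))" using SLnn by simp
    show ?thesis
    proof (cases "p = 0")
      case True then show ?thesis using rhs0 unfolding p_def by simp
    next
      case False
      let ?E = "{norm (u \<theta> m) / inv_norm \<Sigma>0 m | m. m \<in> orthogonal_comp X \<and> m \<noteq> 0}"
      have inE: "norm (u \<theta> p) / inv_norm \<Sigma>0 p \<in> ?E" using pX(2) False by blast
      have bddE: "bdd_below ?E" by (rule bdd_belowI[of _ 0]) (auto simp: invn0 S0nn)
      have eta_le: "\<eta>inf \<le> norm (u \<theta> p) / inv_norm \<Sigma>0 p" unfolding \<eta>inf_def by (rule cInf_lower[OF inE bddE])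
      have eta_ge: "\<eta>inf \<ge> 0" unfolding \<eta>inf_def
        by (rule cInf_greatest) (use inE in \<open>auto simp: invn0 S0nn\<close>)
      have ip: "inv_norm \<Sigma>0 p > 0" using invpos False by blast
      have e1: "\<eta>inf * inv_norm \<Sigma>0 p \<le> norm (u \<theta> m)" using eta_le ip up by (simp add: le_divide_eq)
      have e2: "norm p \<le> C * inv_norm \<Sigma>0 p" using key1 False by blast
      have e3: "\<eta>inf * norm p \<le> C * norm (u \<theta> m)"
      proof -
        have "\<eta>inf * norm p \<le> \<eta>inf * (C * inv_norm \<Sigma>0 p)" using e2 eta_ge by (rule mult_left_mono)
        also have "\<dots> = C * (\<eta>inf * inv_norm \<Sigma>0 p)" by simp
        also have "\<dots> \<le> C * norm (u \<theta> m)" using e1 Cpos by (intro mult_left_mono) auto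
        finally show ?thesis .
      qed
      show ?thesis
      proof (cases "u \<theta> m = 0")
        case True
        then have "\<eta>inf * norm p \<le> 0" using e3 by simp
        then have "\<eta>inf = 0" using eta_ge False by (simp add: mult_le_0_iff)
        then show ?thesis using rhs0 by simp
      next
        case um: False
        define c where "c = norm (u \<theta> m)"
        have cpos: "c > 0" using um unfolding c_def by simp
        define m' where "m' = (1 / c) *\<^sub>R m"
        have um': "u \<theta> m' = (1 / c) *\<^sub>R u \<theta> m" unfolding m'_def by (rule linear_scale[OF lin_u])
        have nm': "norm (u \<theta> m') = 1" using cpos unfolding um' c_def by simp
        have Fm': "F m' = (1 / c) *\<^sub>R F m" unfolding m'_def by (rule linear_scale[OF lin_F])
        let ?B = "{inv_norm \<Sigma>L (obs l (u \<theta> m)) | m. norm (u \<theta> m) = 1}"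
        have inB: "inv_norm \<Sigma>L (F m') \<in> ?B" using nm' unfolding F_def by blast
        have bddB: "bdd_below ?B" by (rule bdd_belowI[of _ 0]) (auto simp: invnL SLnn)
        have b_le: "\<beta> \<le> inv_norm \<Sigma>L (F m')" unfolding \<beta>_def by (rule cInf_lower[OF inB bddB])
        have b_ge: "\<beta> \<ge> 0" unfolding \<beta>_def
          by (rule cInf_greatest) (use inB in \<open>auto simp: invnL SLnn\<close>)
        have "inv_norm \<Sigma>L (F m') = inv_norm \<Sigma>L (F m) / c"
          unfolding Fm' inv_norm_scale using cpos by simp
        then have b1: "\<beta> * c \<le> inv_norm \<Sigma>L (F m)" using b_le cpos by (simp add: le_divide_eq)
        have "\<beta> * (\<eta>inf * norm p) \<le> \<beta> * (C * c)" using e3 b_ge unfolding c_def by (rule mult_left_mono)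
        also have "\<dots> = C * (\<beta> * c)" by simp
        also have "\<dots> \<le> C * inv_norm \<Sigma>L (F m)" using b1 Cpos by (intro mult_left_mono) auto
        finally have fin: "\<beta> * \<eta>inf * norm p \<le> C * inv_norm \<Sigma>L (F m)" by (simp add: mult.assoc)
        have "(\<beta> * \<eta>inf * norm p)\<^sup>2 \<le> (C * inv_norm \<Sigma>L (F m))\<^sup>2"
          by (rule power_mono[OF fin]) (use b_ge eta_ge in simp)
        then show ?thesis unfolding p_def[symmetric] power_mult_distrib invnL GF using SLnn[of "F m"] by simp
      qed
    qed
  qed
  define D where "D = (\<lambda>i. (1 / \<sigma>\<^sup>2) * \<beta>\<^sup>2 * \<eta>inf\<^sup>2 * (norm (Proj (mv i)))\<^sup>2)"
  have res1: "lam i \<le> C\<^sup>2 / (D i + 1)" if i: "i \<in> {1..CARD('m)}" for i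
  proof -
    let ?m = "mv i"
    let ?qL = "(G *v ?m) \<bullet> (SLi *v (G *v ?m))"
    let ?q0 = "?m \<bullet> (S0i *v ?m)"
    have lp: "lam i > 0" by (rule lam_pos[OF i])
    have nm: "norm ?m = 1" using unit[OF i] by (simp add: norm_eq_1)
    have h1: "lam i * ((1 / \<sigma>\<^sup>2) * ?qL + ?q0) = 1" using invq[OF i] unfolding quad .
    have h2: "D i \<le> (1 / \<sigma>\<^sup>2) * (C\<^sup>2 * ?qL)" unfolding D_def using key2[of ?m] \<sigma>_pos
      by (simp add: mult.assoc divide_right_mono)
    have h3: "1 \<le> C\<^sup>2 * ?q0" by (rule key1u[OF nm])
    have Dnn: "D i \<ge> 0" unfolding D_def by simp
    have "lam i * (D i + 1) \<le> lam i * ((1 / \<sigma>\<^sup>2) * (C\<^sup>2 * ?qL) + C\<^sup>2 * ?q0)"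
      using h2 h3 lp by (intro mult_left_mono) auto
    also have "\<dots> = C\<^sup>2 * (lam i * ((1 / \<sigma>\<^sup>2) * ?qL + ?q0))" by (simp add: algebra_simps)
    also have "\<dots> = C\<^sup>2" using h1 by simp
    finally show ?thesis using Dnn by (simp add: le_divide_eq)
  qed
  have res2: "trace Post \<le> C\<^sup>2 * (\<Sum>i=1..CARD('m). 1 / (D i + 1))"
  proof -
    have "trace Post = (\<Sum>i=1..CARD('m). mv i \<bullet> (Post *v mv i))"
      by (rule trace_orthonormal[OF mv_orthonormal])
    also have "\<dots> = (\<Sum>i=1..CARD('m). lam i)" by (rule sum.cong[OF refl]) (rule postq)
    also have "\<dots> \<le> (\<Sum>i=1..CARD('m). C\<^sup>2 / (D i + 1))" by (rule sum_mono) (rule res1)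
    also have "\<dots> = C\<^sup>2 * (\<Sum>i=1..CARD('m). 1 / (D i + 1))" by (simp add: sum_distrib_left)
    finally show ?thesis .
  qed
  show ?thesis
    unfolding Let_def G_def[symmetric] SLi_def[symmetric] S0i_def[symmetric] A_def[symmetric]
      Post_def[symmetric] Cs_def[symmetric] C_def[symmetric] X_def[symmetric] \<eta>inf_def[symmetric]
      \<beta>_def[symmetric] Proj_def[symmetric]
    using res1 res2 unfolding D_def by blast
qed

end
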